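(* Let $\mathbf{A}$ be an algebra and $B,C$ subuniverses of $\mathbf{A}$. Suppose $B$ Jónsson absorbs $\mathbf{A}$ via a Jónsson absorption chain $d_0,\dots,d_k$ and $C$ Jónsson absorbs $\mathbf{A}$ via a Jónsson absorption chain $e_0,\dots,e_l$. Then there is a sequence of ternary terms $f_0,\dots,f_{kl+k}$ which is a Jónsson absorption chain both for $B$ and for $C$; explicitly, one may take $f_{a(l+1)+b}(x,y,z)=d_a(x,e_b(x,y,z),z)$ for $0\le a\le k$, $0\le b\le l$.
   Context: Jónsson absorption chain: for a subuniverse $B$ of $\mathbf{A}$, ternary terms $d_0,\dots,d_n$ of $\mathbf{A}$ such that $d_i(b,a,b')\in B$ for all $i$, all $b,b'\in B$, $a\in A$; $d_i(x,y,y)=d_{i+1}(x,x,y)$ for all $i<n$ and all $x,y\in A$; $d_0(x,y,z)=x$ and $d_n(x,y,z)=z$ for all $x,y,z\in A$. $B$ Jónsson absorbs $\mathbf{A}$ if such a chain exists. *)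

theory Defs
  imports Main
begin

datatype 'f trm = Var nat | Op 'f "'f trm list"

inductive is_term :: "('f \<Rightarrow> nat) \<Rightarrow> nat \<Rightarrow> 'f trm \<Rightarrow> bool" for ar n where
  var: "i < n \<Longrightarrow> is_term ar n (Var i)"
| op: "length ts = ar f \<Longrightarrow> (\<forall>t\<in>set ts. is_term ar n t) \<Longrightarrow> is_term ar n (Op f ts)"

primrec eval :: "('f \<Rightarrow> 'a list \<Rightarrow> 'a) \<Rightarrow> 'f trm \<Rightarrow> 'a list \<Rightarrow> 'a" where
  "eval ops (Var i) xs = xs ! i"
| "eval ops (Op f ts) xs = ops f (map (\<lambda>t. eval ops t xs) ts)"

definition algebra :: "'a set \<Rightarrow> ('f \<Rightarrow> nat) \<Rightarrow> ('f \<Rightarrow> 'a list \<Rightarrow> 'a) \<Rightarrow> bool" where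
  "algebra A ar ops \<longleftrightarrow>
     (\<forall>f xs. length xs = ar f \<and> set xs \<subseteq> A \<longrightarrow> ops f xs \<in> A)"

definition subuniverse :: "'a set \<Rightarrow> ('f \<Rightarrow> nat) \<Rightarrow> ('f \<Rightarrow> 'a list \<Rightarrow> 'a) \<Rightarrow> 'a set \<Rightarrow> bool" where
  "subuniverse A ar ops B \<longleftrightarrow> B \<subseteq> A \<and>
     (\<forall>f xs. length xs = ar f \<and> set xs \<subseteq> B \<longrightarrow> ops f xs \<in> B)"

definition jonsson_chain ::
  "'a set \<Rightarrow> ('f \<Rightarrow> nat) \<Rightarrow> ('f \<Rightarrow> 'a list \<Rightarrow> 'a) \<Rightarrow> 'a set \<Rightarrow> 'f trm list \<Rightarrow> bool" where
  "jonsson_chain A ar ops B ds \<longleftrightarrow>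
     ds \<noteq> [] \<and>
     (\<forall>d\<in>set ds. is_term ar 3 d) \<and>
     (\<forall>i < length ds. \<forall>b\<in>B. \<forall>b'\<in>B. \<forall>a\<in>A. eval ops (ds ! i) [b, a, b'] \<in> B) \<and>
     (\<forall>i. Suc i < length ds \<longrightarrow> (\<forall>x\<in>A. \<forall>y\<in>A.
          eval ops (ds ! i) [x, y, y] = eval ops (ds ! Suc i) [x, x, y])) \<and>
     (\<forall>x\<in>A. \<forall>y\<in>A. \<forall>z\<in>A. eval ops (ds ! 0) [x, y, z] = x) \<and>
     (\<forall>x\<in>A. \<forall>y\<in>A. \<forall>z\<in>A. eval ops (ds ! (length ds - 1)) [x, y, z] = z)"

end

theory Submission
  imports Defs
begin

primrec subst :: "'f trm list \<Rightarrow> 'f trm \<Rightarrow> 'f trm" where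
  "subst s (Var i) = s ! i"
| "subst s (Op f ts) = Op f (map (subst s) ts)"

lemma eval_subst:
  assumes "is_term ar n t" "length s = n"
  shows "eval ops (subst s t) xs = eval ops t (map (\<lambda>u. eval ops u xs) s)"
  using assms
proof (induction rule: is_term.induct)
  case (var i) then show ?case by auto
next
  case (op ts f)
  show ?case using op by (auto simp: comp_def intro!: arg_cong[where f="ops f"] map_cong)
qed

lemma is_term_subst:
  assumes "is_term ar n t" "length s = n" "\<forall>u\<in>set s. is_term ar m u"
  shows "is_term ar m (subst s t)"
  using assms
proof (induction rule: is_term.induct)
  case (var i) then show ?case by auto
next
  case (op ts f) then show ?case by (auto intro!: is_term.op)
qed

lemma eval_in:
  assumes "is_term ar n t" "length xs = n" "set xs \<subseteq> B"
    and "\<forall>f xs. length xs = ar f \<and> set xs \<subseteq> B \<longrightarrow> ops f xs \<in> B"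
  shows "eval ops t xs \<in> B"
  using assms
proof (induction rule: is_term.induct)
  case (var i) then show ?case by auto
next
  case (op ts f)
  have "set (map (\<lambda>t. eval ops t xs) ts) \<subseteq> B" using op by auto
  moreover have "length (map (\<lambda>t. eval ops t xs) ts) = ar f" using op by simp
  ultimately show ?case using op(5) by simp
qed

lemma divmod_aux:
  fixes a b l :: nat assumes "b \<le> l"
  shows "(a * Suc l + b) div Suc l = a" "(a * Suc l + b) mod Suc l = b"
  using assms by (simp_all only: mult.commute[of a] div_mult_self4[of "Suc l"] mod_mult_self4, simp_all)

theorem lemma2p3:
  fixes A B C :: "'a set" and ar :: "'f \<Rightarrow> nat" and ops :: "'f \<Rightarrow> 'a list \<Rightarrow> 'a"
    and ds es :: "'f trm list" and k l :: nat
  assumes "algebra A ar ops"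
    and "subuniverse A ar ops B" and "subuniverse A ar ops C"
    and "length ds = Suc k" and "jonsson_chain A ar ops B ds"
    and "length es = Suc l" and "jonsson_chain A ar ops C es"
  shows "\<exists>fs. length fs = Suc k * Suc l
           \<and> jonsson_chain A ar ops B fs \<and> jonsson_chain A ar ops C fs
           \<and> (\<forall>a\<le>k. \<forall>b\<le>l. \<forall>x\<in>A. \<forall>y\<in>A. \<forall>z\<in>A.
                eval ops (fs ! (a * Suc l + b)) [x, y, z]
                  = eval ops (ds ! a) [x, eval ops (es ! b) [x, y, z], z])"
proof -
  note alg = assms(1)[unfolded algebra_def]
  note sB = assms(2)[unfolded subuniverse_def]
  note sC = assms(3)[unfolded subuniverse_def]
  note jB = assms(5)[unfolded jonsson_chain_def]
  note jC = assms(7)[unfolded jonsson_chain_def]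
  have tds: "\<And>a. a \<le> k \<Longrightarrow> is_term ar 3 (ds ! a)" using jB assms(4) by (auto simp: less_Suc_eq_le)
  have tes: "\<And>b. b \<le> l \<Longrightarrow> is_term ar 3 (es ! b)" using jC assms(6) by (auto simp: less_Suc_eq_le)
  define F where "F a b = subst [Var 0, es ! b, Var 2] (ds ! a)" for a b
  define fs where "fs = map (\<lambda>i. F (i div Suc l) (i mod Suc l)) [0..<Suc k * Suc l]"
  define G where "G a b x y z = eval ops (ds ! a) [x, eval ops (es ! b) [x, y, z], z]" for a b x y z
  have lenfs: "length fs = Suc k * Suc l" by (simp add: fs_def)
  have Fterm: "is_term ar 3 (F a b)" if "a \<le> k" "b \<le> l" for a b
    unfolding F_def
    by (rule is_term_subst[OF tds[OF that(1)]]) (auto intro: is_term.var tes[OF that(2)])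
  have Feval: "eval ops (F a b) [x, y, z] = G a b x y z" if "a \<le> k" "b \<le> l" for a b x y z
    unfolding F_def G_def by (subst eval_subst[OF tds[OF that(1)]]) auto
  have divk: "i div Suc l \<le> k" if "i < Suc k * Suc l" for i
    using that by (metis less_Suc_eq_le less_mult_imp_div_less mult.commute)
  have fsnth: "fs ! i = F (i div Suc l) (i mod Suc l)" if "i < Suc k * Suc l" for i
    using that unfolding fs_def by (subst nth_map) (auto simp del: upt_Suc)
  have fsev: "eval ops (fs ! i) [x, y, z] = G (i div Suc l) (i mod Suc l) x y z"
    if "i < Suc k * Suc l" for i x y z
    using fsnth[OF that] Feval[OF divk[OF that]] by (simp add: less_Suc_eq_le)
  have fsab: "fs ! (a * Suc l + b) = F a b" if "a \<le> k" "b \<le> l" for a b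
  proof -
    have "a * Suc l + b < Suc k * Suc l"
    proof -
      have "a * Suc l + b < a * Suc l + Suc l" using that by simp
      also have "\<dots> = Suc a * Suc l" by simp
      also have "\<dots> \<le> Suc k * Suc l" using that by (intro mult_le_mono1) simp
      finally show ?thesis .
    qed
    then show ?thesis using fsnth divmod_aux[OF that(2)] by simp
  qed
  have eA: "eval ops (es ! b) [x, y, z] \<in> A" if "b \<le> l" "x \<in> A" "y \<in> A" "z \<in> A" for b x y z
    using eval_in[OF tes[OF that(1)], of "[x,y,z]" A ops] alg that by auto
  have Gchain: "G (i div Suc l) (i mod Suc l) x y y = G (Suc i div Suc l) (Suc i mod Suc l) x x y"
    if "Suc i < Suc k * Suc l" "x \<in> A" "y \<in> A" for i x y
  proof (cases "i mod Suc l < l")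
    case True
    have "Suc i div Suc l = i div Suc l" "Suc i mod Suc l = Suc (i mod Suc l)"
      using True by (simp_all add: div_Suc mod_Suc)
    moreover have "eval ops (es ! (i mod Suc l)) [x, y, y] = eval ops (es ! Suc (i mod Suc l)) [x, x, y]"
      using jC assms(6) True that by auto
    ultimately show ?thesis unfolding G_def by simp
  next
    case False
    then have m: "i mod Suc l = l" using mod_Suc_le_divisor[of i l] by simp
    have d: "Suc i div Suc l = Suc (i div Suc l)" "Suc i mod Suc l = 0"
      using m by (simp_all add: div_Suc mod_Suc)
    have ik: "Suc (i div Suc l) < length ds"
      using divk[OF that(1)] d(1) assms(4) by simp
    have "G (i div Suc l) l x y y = eval ops (ds ! (i div Suc l)) [x, y, y]"
      unfolding G_def using jC assms(6) that by auto
    also have "\<dots> = eval ops (ds ! Suc (i div Suc l)) [x, x, y]"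
      using jB ik that by auto
    also have "\<dots> = G (Suc (i div Suc l)) 0 x x y"
      unfolding G_def using jC that by auto
    finally show ?thesis using m d by simp
  qed
  have chain: "jonsson_chain A ar ops D fs" if D: "D \<subseteq> A"
    "\<forall>f xs. length xs = ar f \<and> set xs \<subseteq> D \<longrightarrow> ops f xs \<in> D"
    and absD: "\<And>a b x y z. a \<le> k \<Longrightarrow> b \<le> l \<Longrightarrow> x \<in> D \<Longrightarrow> y \<in> A \<Longrightarrow> z \<in> D \<Longrightarrow> G a b x y z \<in> D"
    for D
    unfolding jonsson_chain_def
  proof (intro conjI ballI allI impI)
    show "fs \<noteq> []" using lenfs by auto
  next
    fix d assume "d \<in> set fs"
    then show "is_term ar 3 d" unfolding fs_def
      using Fterm divk by (auto simp: less_Suc_eq_le)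
  next
    fix i b a b' assume "i < length fs" "b \<in> D" "b' \<in> D" "a \<in> A"
    then show "eval ops (fs ! i) [b, a, b'] \<in> D"
      using fsev absD divk lenfs by (simp add: less_Suc_eq_le)
  next
    fix i x y assume "Suc i < length fs" "x \<in> A" "y \<in> A"
    then show "eval ops (fs ! i) [x, y, y] = eval ops (fs ! Suc i) [x, x, y]"
      using fsev Gchain lenfs by simp
  next
    fix x y z assume xyz: "x \<in> A" "y \<in> A" "z \<in> A"
    have "eval ops (fs ! 0) [x, y, z] = G 0 0 x y z" using fsev[of 0] by simp
    also have "\<dots> = x" unfolding G_def using jB xyz eA[of 0 x y z] by simp
    finally show "eval ops (fs ! 0) [x, y, z] = x" .
  next
    fix x y z assume xyz: "x \<in> A" "y \<in> A" "z \<in> A"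
    have "length fs - 1 = k * Suc l + l" using lenfs by simp
    then have "eval ops (fs ! (length fs - 1)) [x, y, z] = eval ops (F k l) [x, y, z]"
      using fsab[of k l] by simp
    also have "\<dots> = G k l x y z" using Feval by simp
    also have "\<dots> = z" unfolding G_def using jB assms(4) xyz eA[of l x y z] by simp
    finally show "eval ops (fs ! (length fs - 1)) [x, y, z] = z" .
  qed
  have cB: "jonsson_chain A ar ops B fs"
  proof (rule chain)
    show "B \<subseteq> A" using sB by simp
    show "\<forall>f xs. length xs = ar f \<and> set xs \<subseteq> B \<longrightarrow> ops f xs \<in> B" using sB by simp
    fix a b x y z assume h: "a \<le> k" "b \<le> l" "x \<in> B" "y \<in> A" "z \<in> B"
    then have "x \<in> A" "z \<in> A" using sB by auto
    then have "eval ops (es ! b) [x, y, z] \<in> A" using eA h by auto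
    then show "G a b x y z \<in> B" unfolding G_def using jB h assms(4) by (auto simp: less_Suc_eq_le)
  qed
  have cC: "jonsson_chain A ar ops C fs"
  proof (rule chain)
    show "C \<subseteq> A" using sC by simp
    show "\<forall>f xs. length xs = ar f \<and> set xs \<subseteq> C \<longrightarrow> ops f xs \<in> C" using sC by simp
    fix a b x y z assume h: "a \<le> k" "b \<le> l" "x \<in> C" "y \<in> A" "z \<in> C"
    then have e: "eval ops (es ! b) [x, y, z] \<in> C" using jC assms(6) by (auto simp: less_Suc_eq_le)
    show "G a b x y z \<in> C" unfolding G_def
      using eval_in[OF tds[OF h(1)], of "[x, eval ops (es ! b) [x, y, z], z]" C ops] sC h e by auto
  qed
  show ?thesis
    by (rule exI[of _ fs]) (use lenfs cB cC fsab Feval in \<open>auto simp: G_def\<close>)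
qed

end
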